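(* Let $L$ be an $n\times n$ nonsingular M-matrix with integer entries. If $f\in\mathbb{Z}^n$ is $z$-superstable with respect to $L$, then $D^L-f$ is a critical configuration of $L$.
   Context: A Z-matrix is a square real matrix whose off-diagonal entries are all $\le 0$. A nonsingular M-matrix is a Z-matrix $L$ that is invertible with $L^{-1}$ having all entries nonnegative (its diagonal entries are then positive). Vector inequalities are entrywise; $e_i$ is the $i$th standard basis vector. A vector $f\in\mathbb{Z}^n$ with $f\ge0$ is $z$-superstable if for every $z\in\mathbb{Z}^n$ with $z\ge0$, $z\ne0$, there is $i$ with $f_i-(Lz)_i<0$. $D^L\in\mathbb{Z}^n$ is defined by $D^L_i=L_{ii}-1$. A vector $c\in\mathbb{Z}^n$ is stable if $c_i<L_{ii}$ for all $i$ (i.e. $c\le D^L$). A vector $c\in\mathbb{Z}^n$ is a critical configuration if it is stable and there exist $g\in\mathbb{Z}^n$ with $g_i\ge L_{ii}$ for all $i$ and indices $i_1,\dots,i_k$ such that $c=g-\sum_{j=1}^kLe_{i_j}$ and, writing $g^\ell=g-\sum_{j=1}^\ell Le_{i_j}$ ($g^0=g$), one has $g^\ell_{i_{\ell+1}}\ge L_{i_{\ell+1}i_{\ell+1}}$ for all $0\le\ell<k$ (each firing in the sequence is legal). *)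

theory Defs
  imports "HOL-Analysis.Analysis"
begin

definition Z_matrix :: "int ^ 'n ^ 'n \<Rightarrow> bool" where
  "Z_matrix L \<longleftrightarrow> (\<forall>i j. i \<noteq> j \<longrightarrow> L $ i $ j \<le> 0)"

definition real_mat :: "int ^ 'n ^ 'n \<Rightarrow> real ^ 'n ^ 'n" where
  "real_mat L = (\<chi> i j. real_of_int (L $ i $ j))"

definition nonsingular_M_matrix :: "int ^ 'n ^ 'n \<Rightarrow> bool" where
  "nonsingular_M_matrix L \<longleftrightarrow> Z_matrix L \<and> invertible (real_mat L) \<and>
     (\<forall>i j. matrix_inv (real_mat L) $ i $ j \<ge> 0)"

definition z_superstable :: "int ^ 'n ^ 'n \<Rightarrow> int ^ 'n \<Rightarrow> bool" where
  "z_superstable L f \<longleftrightarrow> (\<forall>i. f $ i \<ge> 0) \<and>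
     (\<forall>z :: int ^ 'n. (\<forall>i. z $ i \<ge> 0) \<and> z \<noteq> 0 \<longrightarrow> (\<exists>i. f $ i - (L *v z) $ i < 0))"

definition D_L :: "int ^ 'n ^ 'n \<Rightarrow> int ^ 'n" where
  "D_L L = (\<chi> i. L $ i $ i - 1)"

definition stable :: "int ^ 'n ^ 'n \<Rightarrow> int ^ 'n \<Rightarrow> bool" where
  "stable L c \<longleftrightarrow> (\<forall>i. c $ i < L $ i $ i)"

definition fire :: "int ^ 'n ^ 'n \<Rightarrow> int ^ 'n \<Rightarrow> 'n \<Rightarrow> int ^ 'n" where
  "fire L c i = c - L *v (axis i 1)"

fun legal_seq :: "int ^ 'n ^ 'n \<Rightarrow> int ^ 'n \<Rightarrow> 'n list \<Rightarrow> bool" where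
  "legal_seq L g [] = True"
| "legal_seq L g (i # is) \<longleftrightarrow> g $ i \<ge> L $ i $ i \<and> legal_seq L (fire L g i) is"

definition fire_seq :: "int ^ 'n ^ 'n \<Rightarrow> int ^ 'n \<Rightarrow> 'n list \<Rightarrow> int ^ 'n" where
  "fire_seq L g is = foldl (fire L) g is"

definition critical :: "int ^ 'n ^ 'n \<Rightarrow> int ^ 'n \<Rightarrow> bool" where
  "critical L c \<longleftrightarrow> stable L c \<and>
     (\<exists>g is. (\<forall>i. g $ i \<ge> L $ i $ i) \<and> legal_seq L g is \<and> c = fire_seq L g is)"

end

theory Submission
  imports Defs
begin

lemma minv_right:
  fixes A :: "real^'n^'n"
  assumes "invertible A"
  shows "A ** matrix_inv A = mat 1"
  using someI_ex[OF assms[unfolded invertible_def]] unfolding matrix_inv_def by blast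

lemma fire_step:
  fixes L :: "int ^ 'n ^ 'n" and f :: "int ^ 'n"
  assumes Z: "Z_matrix L" and S: "z_superstable L f"
  shows "(\<forall>i. u $ i \<ge> 0) \<Longrightarrow> nat (sum (\<lambda>i. u $ i) UNIV) = m \<Longrightarrow>
     \<exists>is. legal_seq L (D_L L - f + L *v u) is \<and> fire_seq L (D_L L - f + L *v u) is = D_L L - f"
proof (induction m arbitrary: u rule: less_induct)
  case (less m u)
  show ?case
  proof (cases "u = 0")
    case True
    then show ?thesis by (intro exI[of _ "[]"]) (simp add: fire_seq_def)
  next
    case False
    from S less.prems(1) False obtain i where i: "f $ i - (L *v u) $ i < 0"
      unfolding z_superstable_def by blast
    have f0: "f $ i \<ge> 0" using S unfolding z_superstable_def by blast
    have ui: "u $ i > 0"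
    proof (rule ccontr)
      assume "\<not> u $ i > 0"
      hence "u $ i = 0" using less.prems(1)[rule_format, of i] by simp
      hence "\<forall>j. L $ i $ j * u $ j \<le> 0"
        using Z less.prems(1) unfolding Z_matrix_def
        by (metis mult_nonneg_nonpos2 mult_zero_right)
      hence "(L *v u) $ i \<le> 0" unfolding matrix_vector_mult_def
        by (simp add: sum_nonpos)
      thus False using i f0 by simp
    qed
    define u' where "u' = u - axis i 1"
    have u'nn: "\<forall>j. u' $ j \<ge> 0" using less.prems(1) ui
      by (auto simp: u'_def axis_def)
    have sumu': "sum (\<lambda>j. u' $ j) UNIV = sum (\<lambda>j. u $ j) UNIV - 1"
      unfolding u'_def by (simp add: sum_subtractf axis_def)
    have "sum (\<lambda>j. u $ j) UNIV \<ge> u $ i"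
      using less.prems(1) by (intro member_le_sum) auto
    hence lt: "nat (sum (\<lambda>j. u' $ j) UNIV) < m" using less.prems(2) ui sumu' by simp
    obtain xs where xs: "legal_seq L (D_L L - f + L *v u') xs"
      "fire_seq L (D_L L - f + L *v u') xs = D_L L - f"
      using less.IH[OF lt u'nn refl] by blast
    have fe: "fire L (D_L L - f + L *v u) i = D_L L - f + L *v u'"
      unfolding fire_def u'_def by (simp add: matrix_vector_mult_diff_distrib)
    have leg: "(D_L L - f + L *v u) $ i \<ge> L $ i $ i"
      using i by (simp add: D_L_def)
    show ?thesis
      by (intro exI[of _ "i # xs"]) (use leg fe xs in \<open>simp add: fire_seq_def\<close>)
  qed
qed


lemma exists_v:
  fixes L :: "int ^ 'n ^ 'n" and f :: "int ^ 'n"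
  assumes M: "nonsingular_M_matrix L" and f0: "\<forall>i. f $ i \<ge> 0"
  shows "\<exists>v. (\<forall>i. v $ i \<ge> 0) \<and> (\<forall>i. (L *v v) $ i \<ge> f $ i + 1)"
proof -
  define A where "A = real_mat L"
  define b where "b = (\<chi> i. real_of_int (f$i) + 1)"
  define w where "w = matrix_inv A *v b"
  have inv: "invertible A" and nn: "\<forall>i j. matrix_inv A $ i $ j \<ge> 0"
    using M unfolding nonsingular_M_matrix_def A_def by auto
  have Aw: "A *v w = b" unfolding w_def
    by (simp add: matrix_vector_mul_assoc minv_right[OF inv])
  have w0: "w $ j \<ge> 0" for j
    unfolding w_def matrix_vector_mult_def b_def using nn f0
    by (auto intro!: sum_nonneg mult_nonneg_nonneg simp: add_nonneg_nonneg)
  define K where "K = (\<Sum>i\<in>UNIV. \<Sum>j\<in>UNIV. \<bar>L$i$j\<bar>)"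
  have K0: "K \<ge> 0" unfolding K_def by (auto intro!: sum_nonneg)
  have Ki: "(\<Sum>j\<in>UNIV. \<bar>L$i$j\<bar>) \<le> K" for i
    unfolding K_def by (rule member_le_sum) (auto intro!: sum_nonneg)
  define N where "N = real_of_int (K + 1)"
  define v where "v = (\<chi> j. ceiling (N * w$j))"
  define d where "d = (\<lambda>j. real_of_int (v$j) - N * w$j)"
  have d: "0 \<le> d j" "d j < 1" for j
    unfolding d_def v_def by (auto, linarith)
  have v0: "\<forall>i. v $ i \<ge> 0" 
  proof
    fix i
    have "0 \<le> N * w$i" using w0[of i] K0 unfolding N_def by simp
    thus "v $ i \<ge> 0" unfolding v_def by simp
  qed
  have "(L *v v) $ i \<ge> f $ i + 1" for i
  proof -
    have "real_of_int ((L *v v) $ i) = (\<Sum>j\<in>UNIV. real_of_int (L$i$j) * real_of_int (v$j))"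
      by (simp add: matrix_vector_mult_def)
    also have "\<dots> = N * (\<Sum>j\<in>UNIV. real_of_int (L$i$j) * w$j) + (\<Sum>j\<in>UNIV. real_of_int (L$i$j) * d j)"
      unfolding d_def by (simp add: sum_distrib_left sum.distrib[symmetric] algebra_simps)
    also have "(\<Sum>j\<in>UNIV. real_of_int (L$i$j) * w$j) = b $ i"
      using Aw by (simp add: A_def real_mat_def matrix_vector_mult_def vec_eq_iff)
    also have "b $ i = real_of_int (f$i) + 1" by (simp add: b_def)
    finally have e: "real_of_int ((L *v v) $ i) = N * (real_of_int (f$i) + 1) + (\<Sum>j\<in>UNIV. real_of_int (L$i$j) * d j)" .
    have t: "real_of_int (L$i$j) * d j \<ge> - real_of_int \<bar>L$i$j\<bar>" for j
    proof -
      have "\<bar>real_of_int (L$i$j) * d j\<bar> \<le> real_of_int \<bar>L$i$j\<bar>"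
        using d[of j] by (simp add: abs_mult mult_left_le)
      thus ?thesis by linarith
    qed
    have s1: "(\<Sum>j\<in>UNIV. real_of_int (L$i$j) * d j) \<ge> - (\<Sum>j\<in>UNIV. real_of_int \<bar>L$i$j\<bar>)"
      using sum_mono[of UNIV "\<lambda>j. - real_of_int \<bar>L$i$j\<bar>", OF t] by (simp add: sum_negf)
    have s2: "(\<Sum>j\<in>UNIV. real_of_int \<bar>L$i$j\<bar>) \<le> real_of_int K"
      using Ki[of i] by (metis of_int_le_iff of_int_sum)
    have s: "(\<Sum>j\<in>UNIV. real_of_int (L$i$j) * d j) \<ge> - real_of_int K" using s1 s2 by linarith
    have "real_of_int K * (real_of_int (f$i) + 1) \<ge> real_of_int K * 1"
      using K0 f0 by (intro mult_left_mono) auto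
    hence "real_of_int ((L *v v) $ i) \<ge> real_of_int (f$i) + 1"
      using e s unfolding N_def by (simp add: algebra_simps)
    thus ?thesis by linarith
  qed
  with v0 show ?thesis by blast
qed

theorem mainTheorem12:
  fixes L :: "int ^ 'n ^ 'n" and f :: "int ^ 'n"
  assumes "nonsingular_M_matrix L"
    and "z_superstable L f"
  shows "critical L (D_L L - f)"
proof -
  have Z: "Z_matrix L" using assms(1) unfolding nonsingular_M_matrix_def by simp
  have f0: "\<forall>i. f $ i \<ge> 0" using assms(2) unfolding z_superstable_def by simp
  obtain v where v0: "\<forall>i. v $ i \<ge> 0" and vL: "\<forall>i. (L *v v) $ i \<ge> f $ i + 1"
    using exists_v[OF assms(1) f0] by blast
  obtain xs where xs: "legal_seq L (D_L L - f + L *v v) xs"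
     "fire_seq L (D_L L - f + L *v v) xs = D_L L - f"
    using fire_step[OF Z assms(2) v0 refl] by blast
  have g: "\<forall>i. (D_L L - f + L *v v) $ i \<ge> L $ i $ i"
    using vL by (simp add: D_L_def) (smt (verit))
  have st: "stable L (D_L L - f)" using f0 by (simp add: stable_def D_L_def) (smt (verit))
  show ?thesis unfolding critical_def using st g xs by metis
qed

end
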